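(* Let $G>I$ be a finite group with $Z(G)=I$ and let $(2A,3A,C)$ be a class vector of $G$ with $l^i(2A,3A,C)>0$, where $2A$ is a class of involutions and $3A$ is a class of elements of order $3$. Then $\Sigma^i(C,C,C,2A)$ contains $B_4$-orbits of length $4$. In addition, $l^i(C,C,3A^{-1})>0$, where $3A^{-1}=\{\tau^{-1}:\tau\in 3A\}$.
   Context: $\iota$ is the identity and $I$ the trivial group. A class vector is a tuple of non-trivial conjugacy classes. $\Sigma^i(C_1,\dots,C_m)$ is the set of $G$-conjugacy classes $[\sigma_1,\dots,\sigma_m]$ (simultaneous conjugation) of tuples with $\sigma_j\in C_j$, $\langle\sigma_1,\dots,\sigma_m\rangle=G$, $\sigma_1\cdots\sigma_m=\iota$, and $l^i(C_1,\dots,C_m)=|\Sigma^i(C_1,\dots,C_m)|$. The Hurwitz braid group $H_4=\langle\beta_2,\beta_3,\beta_4\rangle$ acts from the right by $[\underline{\sigma}]^{\beta_2}=[\sigma_1\sigma_2\sigma_1^{-1},\sigma_1,\sigma_3,\sigma_4]$, $[\underline{\sigma}]^{\beta_3}=[\sigma_1,\sigma_2\sigma_3\sigma_2^{-1},\sigma_2,\sigma_4]$, $[\underline{\sigma}]^{\beta_4}=[\sigma_1,\sigma_2,\sigma_3\sigma_4\sigma_3^{-1},\sigma_3]$, and the pure braid group $B_4$ is generated by $\beta_{12}=\beta_2^2$, $\beta_{13}=\beta_2^{-1}\beta_3^2\beta_2$, $\beta_{14}=\beta_2^{-1}\beta_3^{-1}\beta_4^2\beta_3\beta_2$, $\beta_{23}=\beta_3^2$,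 $\beta_{24}=\beta_3^{-1}\beta_4^2\beta_3$, $\beta_{34}=\beta_4^2$; it preserves each $\Sigma^i(C_1,\dots,C_4)$. *)

theory Defs
  imports "HOL-Algebra.Algebra"
begin

definition grp_center :: "('a, 'b) monoid_scheme \<Rightarrow> 'a set" where
  "grp_center G = {z \<in> carrier G. \<forall>g \<in> carrier G. z \<otimes>\<^bsub>G\<^esub> g = g \<otimes>\<^bsub>G\<^esub> z}"

definition conj_class :: "('a, 'b) monoid_scheme \<Rightarrow> 'a \<Rightarrow> 'a set" where
  "conj_class G x = {g \<otimes>\<^bsub>G\<^esub> x \<otimes>\<^bsub>G\<^esub> inv\<^bsub>G\<^esub> g | g. g \<in> carrier G}"

definition is_conj_class :: "('a, 'b) monoid_scheme \<Rightarrow> 'a set \<Rightarrow> bool" where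
  "is_conj_class G K \<longleftrightarrow> (\<exists>x \<in> carrier G. K = conj_class G x)"

definition nontriv_conj_class :: "('a, 'b) monoid_scheme \<Rightarrow> 'a set \<Rightarrow> bool" where
  "nontriv_conj_class G K \<longleftrightarrow> is_conj_class G K \<and> K \<noteq> {\<one>\<^bsub>G\<^esub>}"

definition tuple_prod :: "('a, 'b) monoid_scheme \<Rightarrow> 'a list \<Rightarrow> 'a" where
  "tuple_prod G s = foldr (\<lambda>x y. x \<otimes>\<^bsub>G\<^esub> y) s \<one>\<^bsub>G\<^esub>"

definition gen_tuples :: "('a, 'b) monoid_scheme \<Rightarrow> 'a set list \<Rightarrow> 'a list set" where
  "gen_tuples G Cs = {s. length s = length Cs \<and> (\<forall>j < length Cs. s ! j \<in> Cs ! j)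
      \<and> generate G (set s) = carrier G \<and> tuple_prod G s = \<one>\<^bsub>G\<^esub>}"

definition sim_conj :: "('a, 'b) monoid_scheme \<Rightarrow> 'a \<Rightarrow> 'a list \<Rightarrow> 'a list" where
  "sim_conj G g s = map (\<lambda>x. g \<otimes>\<^bsub>G\<^esub> x \<otimes>\<^bsub>G\<^esub> inv\<^bsub>G\<^esub> g) s"

definition tuple_class :: "('a, 'b) monoid_scheme \<Rightarrow> 'a list \<Rightarrow> 'a list set" where
  "tuple_class G s = {sim_conj G g s | g. g \<in> carrier G}"

definition Sigma_i :: "('a, 'b) monoid_scheme \<Rightarrow> 'a set list \<Rightarrow> 'a list set set" where
  "Sigma_i G Cs = tuple_class G ` gen_tuples G Cs"

definition l_i :: "('a, 'b) monoid_scheme \<Rightarrow> 'a set list \<Rightarrow> nat" where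
  "l_i G Cs = card (Sigma_i G Cs)"

(* Hurwitz braid generators acting (from the right) on 4-tuples, and their inverses *)
definition beta2 :: "('a, 'b) monoid_scheme \<Rightarrow> 'a list \<Rightarrow> 'a list" where
  "beta2 G s = [s!0 \<otimes>\<^bsub>G\<^esub> s!1 \<otimes>\<^bsub>G\<^esub> inv\<^bsub>G\<^esub> (s!0), s!0, s!2, s!3]"
definition beta3 :: "('a, 'b) monoid_scheme \<Rightarrow> 'a list \<Rightarrow> 'a list" where
  "beta3 G s = [s!0, s!1 \<otimes>\<^bsub>G\<^esub> s!2 \<otimes>\<^bsub>G\<^esub> inv\<^bsub>G\<^esub> (s!1), s!1, s!3]"
definition beta4 :: "('a, 'b) monoid_scheme \<Rightarrow> 'a list \<Rightarrow> 'a list" where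
  "beta4 G s = [s!0, s!1, s!2 \<otimes>\<^bsub>G\<^esub> s!3 \<otimes>\<^bsub>G\<^esub> inv\<^bsub>G\<^esub> (s!2), s!2]"
definition beta2_inv :: "('a, 'b) monoid_scheme \<Rightarrow> 'a list \<Rightarrow> 'a list" where
  "beta2_inv G s = [s!1, inv\<^bsub>G\<^esub> (s!1) \<otimes>\<^bsub>G\<^esub> s!0 \<otimes>\<^bsub>G\<^esub> s!1, s!2, s!3]"
definition beta3_inv :: "('a, 'b) monoid_scheme \<Rightarrow> 'a list \<Rightarrow> 'a list" where
  "beta3_inv G s = [s!0, s!2, inv\<^bsub>G\<^esub> (s!2) \<otimes>\<^bsub>G\<^esub> s!1 \<otimes>\<^bsub>G\<^esub> s!2, s!3]"
definition beta4_inv :: "('a, 'b) monoid_scheme \<Rightarrow> 'a list \<Rightarrow> 'a list" where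
  "beta4_inv G s = [s!0, s!1, s!3, inv\<^bsub>G\<^esub> (s!3) \<otimes>\<^bsub>G\<^esub> s!2 \<otimes>\<^bsub>G\<^esub> s!3]"

(* Pure braid generators. Right action: x^(g h) = (x^g)^h, so the word
   b_1 b_2 ... b_k acts as the function b_k o ... o b_1. *)
definition pure_braid_gens :: "('a, 'b) monoid_scheme \<Rightarrow> ('a list \<Rightarrow> 'a list) set" where
  "pure_braid_gens G =
    (let b2 = beta2 G; b3 = beta3 G; b4 = beta4 G;
         b2' = beta2_inv G; b3' = beta3_inv G; b4' = beta4_inv G in
     { b2 \<circ> b2,                                   \<comment> \<open>beta12\<close>
       b2 \<circ> b3 \<circ> b3 \<circ> b2',                       \<comment> \<open>beta13\<close>
       b2 \<circ> b3 \<circ> b4 \<circ> b4 \<circ> b3' \<circ> b2',          \<comment> \<open>beta14\<close>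
       b3 \<circ> b3,                                   \<comment> \<open>beta23\<close>
       b3 \<circ> b4 \<circ> b4 \<circ> b3',                       \<comment> \<open>beta24\<close>
       b4 \<circ> b4,                                   \<comment> \<open>beta34\<close>
       \<comment> \<open>inverses of the above\<close>
       b2' \<circ> b2',
       b2' \<circ> b3' \<circ> b3' \<circ> b2,
       b2' \<circ> b3' \<circ> b4' \<circ> b4' \<circ> b3 \<circ> b2,
       b3' \<circ> b3',
       b3' \<circ> b4' \<circ> b4' \<circ> b3,
       b4' \<circ> b4' })"

definition pure_step :: "('a, 'b) monoid_scheme \<Rightarrow> ('a list \<times> 'a list) set" where
  "pure_step G = {(s, f s) | s f. f \<in> pure_braid_gens G}"

(* B_4-orbit of a class X = [sigma] in Sigma^i(C_1,...,C_4):
   all classes [sigma^w] for w in the pure braid group B_4 *)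
definition pure_braid_orbit :: "('a, 'b) monoid_scheme \<Rightarrow> 'a list set \<Rightarrow> 'a list set set" where
  "pure_braid_orbit G Y = {tuple_class G t | s t. s \<in> Y \<and> (s, t) \<in> rtrancl (pure_step G)}"

end

theory Submission
  imports Defs
begin

context group
begin

lemma sim_conj_comp:
  assumes "set s \<subseteq> carrier G" "g \<in> carrier G" "h \<in> carrier G"
  shows "sim_conj G g (sim_conj G h s) = sim_conj G (g \<otimes> h) s"
  unfolding sim_conj_def using assms
  by (auto simp: m_assoc inv_mult_group intro!: map_cong)

lemma sim_conj_one:
  assumes "set s \<subseteq> carrier G"
  shows "sim_conj G \<one> s = s"
  unfolding sim_conj_def using assms by (induct s) auto

lemma sim_conj_set:
  assumes "set s \<subseteq> carrier G" "g \<in> carrier G"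
  shows "set (sim_conj G g s) \<subseteq> carrier G"
  unfolding sim_conj_def using assms by auto

lemma tc_self:
  assumes "set s \<subseteq> carrier G"
  shows "s \<in> tuple_class G s"
  unfolding tuple_class_def using sim_conj_one[OF assms] by force

lemma tc_conj:
  assumes "set s \<subseteq> carrier G" "g \<in> carrier G"
  shows "tuple_class G (sim_conj G g s) = tuple_class G s"
proof
  show "tuple_class G (sim_conj G g s) \<subseteq> tuple_class G s"
    unfolding tuple_class_def using assms by (auto simp: sim_conj_comp)
next
  show "tuple_class G s \<subseteq> tuple_class G (sim_conj G g s)"
  proof
    fix t assume "t \<in> tuple_class G s"
    then obtain h where h: "h \<in> carrier G" "t = sim_conj G h s" unfolding tuple_class_def by auto
    have "sim_conj G (h \<otimes> inv g) (sim_conj G g s) = sim_conj G h s"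
      using assms h by (simp add: sim_conj_comp m_assoc)
    moreover have "h \<otimes> inv g \<in> carrier G" using h assms by simp
    ultimately show "t \<in> tuple_class G (sim_conj G g s)"
      unfolding tuple_class_def using h by (intro CollectI exI[of _ "h \<otimes> inv g"] conjI) auto
  qed
qed

definition P4 :: "'a list \<Rightarrow> bool" where
  "P4 s \<longleftrightarrow> length s = 4 \<and> set s \<subseteq> carrier G"

lemma P4_cases:
  assumes "P4 s"
  obtains x0 x1 x2 x3 where "s = [x0, x1, x2, x3]" "x0 \<in> carrier G" "x1 \<in> carrier G"
    "x2 \<in> carrier G" "x3 \<in> carrier G"
proof -
  from assms have l: "length s = 4" and c: "set s \<subseteq> carrier G" unfolding P4_def by auto
  from l obtain x0 x1 x2 x3 where "s = [x0, x1, x2, x3]"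
    by (auto simp: numeral_eq_Suc length_Suc_conv)
  with c that show ?thesis by auto
qed

lemmas bdefs = beta2_def beta3_def beta4_def beta2_inv_def beta3_inv_def beta4_inv_def

lemma l_cancel2: "x \<in> carrier G \<Longrightarrow> y \<in> carrier G \<Longrightarrow> inv x \<otimes> (x \<otimes> y) = y"
  by (simp flip: m_assoc)
lemma r_cancel2: "x \<in> carrier G \<Longrightarrow> y \<in> carrier G \<Longrightarrow> x \<otimes> (inv x \<otimes> y) = y"
  by (simp flip: m_assoc)

lemma P4_conj: "P4 s \<Longrightarrow> g \<in> carrier G \<Longrightarrow> P4 (sim_conj G g s)"
  apply (elim P4_cases) by (simp add: P4_def sim_conj_def)

lemma bp0: "P4 s \<Longrightarrow> P4 (beta2 G s)"
  apply (elim P4_cases) by (simp add: P4_def bdefs)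
lemma bc0: "P4 s \<Longrightarrow> g \<in> carrier G \<Longrightarrow> beta2 G (sim_conj G g s) = sim_conj G g (beta2 G s)"
  apply (elim P4_cases) by (simp add: bdefs sim_conj_def m_assoc inv_mult_group l_cancel2 r_cancel2)
lemma bp1: "P4 s \<Longrightarrow> P4 (beta3 G s)"
  apply (elim P4_cases) by (simp add: P4_def bdefs)
lemma bc1: "P4 s \<Longrightarrow> g \<in> carrier G \<Longrightarrow> beta3 G (sim_conj G g s) = sim_conj G g (beta3 G s)"
  apply (elim P4_cases) by (simp add: bdefs sim_conj_def m_assoc inv_mult_group l_cancel2 r_cancel2)
lemma bp2: "P4 s \<Longrightarrow> P4 (beta4 G s)"
  apply (elim P4_cases) by (simp add: P4_def bdefs)
lemma bc2: "P4 s \<Longrightarrow> g \<in> carrier G \<Longrightarrow> beta4 G (sim_conj G g s) = sim_conj G g (beta4 G s)"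
  apply (elim P4_cases) by (simp add: bdefs sim_conj_def m_assoc inv_mult_group l_cancel2 r_cancel2)
lemma bp3: "P4 s \<Longrightarrow> P4 (beta2_inv G s)"
  apply (elim P4_cases) by (simp add: P4_def bdefs)
lemma bc3: "P4 s \<Longrightarrow> g \<in> carrier G \<Longrightarrow> beta2_inv G (sim_conj G g s) = sim_conj G g (beta2_inv G s)"
  apply (elim P4_cases) by (simp add: bdefs sim_conj_def m_assoc inv_mult_group l_cancel2 r_cancel2)
lemma bp4: "P4 s \<Longrightarrow> P4 (beta3_inv G s)"
  apply (elim P4_cases) by (simp add: P4_def bdefs)
lemma bc4: "P4 s \<Longrightarrow> g \<in> carrier G \<Longrightarrow> beta3_inv G (sim_conj G g s) = sim_conj G g (beta3_inv G s)"
  apply (elim P4_cases) by (simp add: bdefs sim_conj_def m_assoc inv_mult_group l_cancel2 r_cancel2)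
lemma bp5: "P4 s \<Longrightarrow> P4 (beta4_inv G s)"
  apply (elim P4_cases) by (simp add: P4_def bdefs)
lemma bc5: "P4 s \<Longrightarrow> g \<in> carrier G \<Longrightarrow> beta4_inv G (sim_conj G g s) = sim_conj G g (beta4_inv G s)"
  apply (elim P4_cases) by (simp add: bdefs sim_conj_def m_assoc inv_mult_group l_cancel2 r_cancel2)
lemmas beta_P4 = bp0 bp1 bp2 bp3 bp4 bp5
lemmas beta_conj = bc0 bc1 bc2 bc3 bc4 bc5

lemma gens_P4_conj:
  assumes "f \<in> pure_braid_gens G" "P4 s" "g \<in> carrier G"
  shows "P4 (f s) \<and> f (sim_conj G g s) = sim_conj G g (f s)"
  using assms unfolding pure_braid_gens_def Let_def
  by (elim insertE emptyE) (simp_all add: beta_P4 beta_conj)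

definition cent :: "'a \<Rightarrow> 'a set" where
  "cent k = {x \<in> carrier G. k \<otimes> x = x \<otimes> k}"

lemma cent_mult: "x \<in> cent k \<Longrightarrow> y \<in> cent k \<Longrightarrow> k \<in> carrier G \<Longrightarrow> x \<otimes> y \<in> cent k"
  unfolding cent_def by (auto simp: m_assoc[symmetric]) (simp add: m_assoc)

lemma cent_inv: "x \<in> cent k \<Longrightarrow> k \<in> carrier G \<Longrightarrow> inv x \<in> cent k"
proof -
  assume x: "x \<in> cent k" and k: "k \<in> carrier G"
  then have xc: "x \<in> carrier G" and e: "k \<otimes> x = x \<otimes> k" unfolding cent_def by auto
  have "k \<otimes> inv x = inv x \<otimes> (x \<otimes> k) \<otimes> inv x" using xc k by (simp add: m_assoc l_cancel2)
  also have "\<dots> = inv x \<otimes> (k \<otimes> x) \<otimes> inv x" using e by simp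
  also have "\<dots> = inv x \<otimes> k" using xc k by (simp add: m_assoc)
  finally have "k \<otimes> inv x = inv x \<otimes> k" .
  then show ?thesis using xc unfolding cent_def by auto
qed

lemma conj_fix: "k \<otimes> u \<otimes> inv k = u \<Longrightarrow> k \<in> carrier G \<Longrightarrow> u \<in> carrier G \<Longrightarrow> k \<otimes> u = u \<otimes> k"
  by (metis inv_closed l_inv m_assoc m_closed r_one)

end

locale abg = group G for G (structure) +
  fixes a b
  assumes a: "a \<in> carrier G" and b: "b \<in> carrier G"
    and aa: "a \<otimes> a = \<one>" and bbb: "b \<otimes> b \<otimes> b = \<one>"
    and gen: "generate G {a, b} = carrier G"
    and cen: "grp_center G = {\<one>}"
    and an1: "a \<noteq> \<one>"
begin

lemma ws1: "inv a = a" using aa a by (simp add: inv_equality)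
lemma ws2: "inv b = b \<otimes> b" using bbb b by (metis inv_equality m_assoc m_closed)
lemma ws3: "x \<in> carrier G \<Longrightarrow> a \<otimes> (a \<otimes> x) = x" using aa a by (simp flip: m_assoc)
lemma ws4: "b \<otimes> (b \<otimes> b) = \<one>" using bbb b by (simp add: m_assoc)
lemma ws5: "x \<in> carrier G \<Longrightarrow> b \<otimes> (b \<otimes> (b \<otimes> x)) = x" using bbb b by (simp flip: m_assoc)
lemmas ws = ws1 ws2 ws3 ws4 ws5 aa m_assoc inv_mult_group a b

lemma central_one:
  assumes k: "k \<in> carrier G" and ka: "a \<in> cent k" and kb: "b \<in> cent k"
  shows "k = \<one>"
proof -
  have "x \<in> cent k" if "x \<in> generate G {a, b}" for x
    using that
  proof (induction rule: generate.induct)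
    case one then show ?case using k by (simp add: cent_def)
  next
    case (incl h) then show ?case using ka kb by auto
  next
    case (inv h) then show ?case using ka kb k cent_inv by auto
  next
    case (eng h1 h2) then show ?case using k cent_mult by auto
  qed
  then have "k \<in> grp_center G" using k gen unfolding grp_center_def cent_def by auto
  then show ?thesis using cen by auto
qed

lemma ab_noncomm: "a \<otimes> b \<noteq> b \<otimes> a"
proof
  assume "a \<otimes> b = b \<otimes> a"
  then have "b \<in> cent a" unfolding cent_def using b by auto
  moreover have "a \<in> cent a" unfolding cent_def using a by auto
  ultimately have "a = \<one>" using central_one a by auto
  then show False using an1 by simp
qed

definition R :: "nat \<Rightarrow> 'a list" where
  "R n = (if n = 0 then [inv b \<otimes> a, a \<otimes> inv b, inv b \<otimes> a, a]
     else if n = 1 then [a \<otimes> inv b, b \<otimes> a \<otimes> b, inv b \<otimes> a, a]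
     else if n = 2 then [a \<otimes> b \<otimes> a \<otimes> b \<otimes> a, a \<otimes> inv b, a \<otimes> inv b, a]
     else [a \<otimes> inv b, a \<otimes> inv b, inv b \<otimes> a, a \<otimes> inv b \<otimes> a \<otimes> b \<otimes> a])"

lemma Rset: "set (R n) \<subseteq> carrier G"
  by (simp add: R_def a b)

lemma RP4: "P4 (R n)"
  by (simp add: R_def P4_def a b)

lemma wit: "j < 4 \<Longrightarrow> h \<in> carrier G \<Longrightarrow> Z = sim_conj G h (R j) \<Longrightarrow> \<exists>j<4. \<exists>h\<in>carrier G. Z = sim_conj G h (R j)"
  by blast

lemma c0_0: "\<exists>j<4. \<exists>h\<in>carrier G. beta2 G (beta2 G (R 0)) = sim_conj G h (R j)"
  by (rule wit[of 1 "\<one>"]) (simp_all add: R_def beta2_def beta3_def beta4_def beta2_inv_def beta3_inv_def beta4_inv_def sim_conj_def ws)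

lemma c0_1: "\<exists>j<4. \<exists>h\<in>carrier G. beta2 G (beta3 G (beta3 G (beta2_inv G (R 0)))) = sim_conj G h (R j)"
  by (rule wit[of 2 "\<one>"]) (simp_all add: R_def beta2_def beta3_def beta4_def beta2_inv_def beta3_inv_def beta4_inv_def sim_conj_def ws)

lemma c0_2: "\<exists>j<4. \<exists>h\<in>carrier G. beta2 G (beta3 G (beta4 G (beta4 G (beta3_inv G (beta2_inv G (R 0)))))) = sim_conj G h (R j)"
  by (rule wit[of 3 "\<one>"]) (simp_all add: R_def beta2_def beta3_def beta4_def beta2_inv_def beta3_inv_def beta4_inv_def sim_conj_def ws)

lemma c0_3: "\<exists>j<4. \<exists>h\<in>carrier G. beta3 G (beta3 G (R 0)) = sim_conj G h (R j)"
  by (rule wit[of 3 "a \<otimes> b \<otimes> a"]) (simp_all add: R_def beta2_def beta3_def beta4_def beta2_inv_def beta3_inv_def beta4_inv_def sim_conj_def ws)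

lemma c0_4: "\<exists>j<4. \<exists>h\<in>carrier G. beta3 G (beta4 G (beta4 G (beta3_inv G (R 0)))) = sim_conj G h (R j)"
  by (rule wit[of 0 "a \<otimes> b \<otimes> a \<otimes> b"]) (simp_all add: R_def beta2_def beta3_def beta4_def beta2_inv_def beta3_inv_def beta4_inv_def sim_conj_def ws)

lemma c0_5: "\<exists>j<4. \<exists>h\<in>carrier G. beta4 G (beta4 G (R 0)) = sim_conj G h (R j)"
  by (rule wit[of 1 "inv b"]) (simp_all add: R_def beta2_def beta3_def beta4_def beta2_inv_def beta3_inv_def beta4_inv_def sim_conj_def ws)

lemma c0_6: "\<exists>j<4. \<exists>h\<in>carrier G. beta2_inv G (beta2_inv G (R 0)) = sim_conj G h (R j)"
  by (rule wit[of 2 "a"]) (simp_all add: R_def beta2_def beta3_def beta4_def beta2_inv_def beta3_inv_def beta4_inv_def sim_conj_def ws)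

lemma c0_7: "\<exists>j<4. \<exists>h\<in>carrier G. beta2_inv G (beta3_inv G (beta3_inv G (beta2 G (R 0)))) = sim_conj G h (R j)"
  by (rule wit[of 0 "\<one>"]) (simp_all add: R_def beta2_def beta3_def beta4_def beta2_inv_def beta3_inv_def beta4_inv_def sim_conj_def ws)

lemma c0_8: "\<exists>j<4. \<exists>h\<in>carrier G. beta2_inv G (beta3_inv G (beta4_inv G (beta4_inv G (beta3 G (beta2 G (R 0)))))) = sim_conj G h (R j)"
  by (rule wit[of 1 "b \<otimes> a"]) (simp_all add: R_def beta2_def beta3_def beta4_def beta2_inv_def beta3_inv_def beta4_inv_def sim_conj_def ws)

lemma c0_9: "\<exists>j<4. \<exists>h\<in>carrier G. beta3_inv G (beta3_inv G (R 0)) = sim_conj G h (R j)"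
  by (rule wit[of 1 "a"]) (simp_all add: R_def beta2_def beta3_def beta4_def beta2_inv_def beta3_inv_def beta4_inv_def sim_conj_def ws)

lemma c0_10: "\<exists>j<4. \<exists>h\<in>carrier G. beta3_inv G (beta4_inv G (beta4_inv G (beta3 G (R 0)))) = sim_conj G h (R j)"
  by (rule wit[of 3 "a \<otimes> b \<otimes> a \<otimes> b \<otimes> a"]) (simp_all add: R_def beta2_def beta3_def beta4_def beta2_inv_def beta3_inv_def beta4_inv_def sim_conj_def ws)

lemma c0_11: "\<exists>j<4. \<exists>h\<in>carrier G. beta4_inv G (beta4_inv G (R 0)) = sim_conj G h (R j)"
  by (rule wit[of 2 "b \<otimes> a"]) (simp_all add: R_def beta2_def beta3_def beta4_def beta2_inv_def beta3_inv_def beta4_inv_def sim_conj_def ws)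

lemma clos0: "f \<in> pure_braid_gens G \<Longrightarrow> \<exists>j<4. \<exists>h\<in>carrier G. f (R 0) = sim_conj G h (R j)"
  unfolding pure_braid_gens_def Let_def by (elim insertE emptyE) (simp_all only: comp_apply c0_0 c0_1 c0_2 c0_3 c0_4 c0_5 c0_6 c0_7 c0_8 c0_9 c0_10 c0_11)

lemma c1_0: "\<exists>j<4. \<exists>h\<in>carrier G. beta2 G (beta2 G (R 1)) = sim_conj G h (R j)"
  by (rule wit[of 2 "a"]) (simp_all add: R_def beta2_def beta3_def beta4_def beta2_inv_def beta3_inv_def beta4_inv_def sim_conj_def ws)

lemma c1_1: "\<exists>j<4. \<exists>h\<in>carrier G. beta2 G (beta3 G (beta3 G (beta2_inv G (R 1)))) = sim_conj G h (R j)"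
  by (rule wit[of 1 "\<one>"]) (simp_all add: R_def beta2_def beta3_def beta4_def beta2_inv_def beta3_inv_def beta4_inv_def sim_conj_def ws)

lemma c1_2: "\<exists>j<4. \<exists>h\<in>carrier G. beta2 G (beta3 G (beta4 G (beta4 G (beta3_inv G (beta2_inv G (R 1)))))) = sim_conj G h (R j)"
  by (rule wit[of 0 "inv b \<otimes> a"]) (simp_all add: R_def beta2_def beta3_def beta4_def beta2_inv_def beta3_inv_def beta4_inv_def sim_conj_def ws)

lemma c1_3: "\<exists>j<4. \<exists>h\<in>carrier G. beta3 G (beta3 G (R 1)) = sim_conj G h (R j)"
  by (rule wit[of 0 "a"]) (simp_all add: R_def beta2_def beta3_def beta4_def beta2_inv_def beta3_inv_def beta4_inv_def sim_conj_def ws)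

lemma c1_4: "\<exists>j<4. \<exists>h\<in>carrier G. beta3 G (beta4 G (beta4 G (beta3_inv G (R 1)))) = sim_conj G h (R j)"
  by (rule wit[of 3 "\<one>"]) (simp_all add: R_def beta2_def beta3_def beta4_def beta2_inv_def beta3_inv_def beta4_inv_def sim_conj_def ws)

lemma c1_5: "\<exists>j<4. \<exists>h\<in>carrier G. beta4 G (beta4 G (R 1)) = sim_conj G h (R j)"
  by (rule wit[of 2 "inv b \<otimes> a"]) (simp_all add: R_def beta2_def beta3_def beta4_def beta2_inv_def beta3_inv_def beta4_inv_def sim_conj_def ws)

lemma c1_6: "\<exists>j<4. \<exists>h\<in>carrier G. beta2_inv G (beta2_inv G (R 1)) = sim_conj G h (R j)"
  by (rule wit[of 0 "\<one>"]) (simp_all add: R_def beta2_def beta3_def beta4_def beta2_inv_def beta3_inv_def beta4_inv_def sim_conj_def ws)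

lemma c1_7: "\<exists>j<4. \<exists>h\<in>carrier G. beta2_inv G (beta3_inv G (beta3_inv G (beta2 G (R 1)))) = sim_conj G h (R j)"
  by (rule wit[of 2 "\<one>"]) (simp_all add: R_def beta2_def beta3_def beta4_def beta2_inv_def beta3_inv_def beta4_inv_def sim_conj_def ws)

lemma c1_8: "\<exists>j<4. \<exists>h\<in>carrier G. beta2_inv G (beta3_inv G (beta4_inv G (beta4_inv G (beta3 G (beta2 G (R 1)))))) = sim_conj G h (R j)"
  by (rule wit[of 3 "a \<otimes> b \<otimes> a \<otimes> b \<otimes> a"]) (simp_all add: R_def beta2_def beta3_def beta4_def beta2_inv_def beta3_inv_def beta4_inv_def sim_conj_def ws)

lemma c1_9: "\<exists>j<4. \<exists>h\<in>carrier G. beta3_inv G (beta3_inv G (R 1)) = sim_conj G h (R j)"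
  by (rule wit[of 3 "b \<otimes> a"]) (simp_all add: R_def beta2_def beta3_def beta4_def beta2_inv_def beta3_inv_def beta4_inv_def sim_conj_def ws)

lemma c1_10: "\<exists>j<4. \<exists>h\<in>carrier G. beta3_inv G (beta4_inv G (beta4_inv G (beta3 G (R 1)))) = sim_conj G h (R j)"
  by (rule wit[of 1 "a \<otimes> inv b \<otimes> a \<otimes> inv b"]) (simp_all add: R_def beta2_def beta3_def beta4_def beta2_inv_def beta3_inv_def beta4_inv_def sim_conj_def ws)

lemma c1_11: "\<exists>j<4. \<exists>h\<in>carrier G. beta4_inv G (beta4_inv G (R 1)) = sim_conj G h (R j)"
  by (rule wit[of 0 "b"]) (simp_all add: R_def beta2_def beta3_def beta4_def beta2_inv_def beta3_inv_def beta4_inv_def sim_conj_def ws)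

lemma clos1: "f \<in> pure_braid_gens G \<Longrightarrow> \<exists>j<4. \<exists>h\<in>carrier G. f (R 1) = sim_conj G h (R j)"
  unfolding pure_braid_gens_def Let_def by (elim insertE emptyE) (simp_all only: comp_apply c1_0 c1_1 c1_2 c1_3 c1_4 c1_5 c1_6 c1_7 c1_8 c1_9 c1_10 c1_11)

lemma c2_0: "\<exists>j<4. \<exists>h\<in>carrier G. beta2 G (beta2 G (R 2)) = sim_conj G h (R j)"
  by (rule wit[of 0 "a"]) (simp_all add: R_def beta2_def beta3_def beta4_def beta2_inv_def beta3_inv_def beta4_inv_def sim_conj_def ws)

lemma c2_1: "\<exists>j<4. \<exists>h\<in>carrier G. beta2 G (beta3 G (beta3 G (beta2_inv G (R 2)))) = sim_conj G h (R j)"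
  by (rule wit[of 3 "b \<otimes> a"]) (simp_all add: R_def beta2_def beta3_def beta4_def beta2_inv_def beta3_inv_def beta4_inv_def sim_conj_def ws)

lemma c2_2: "\<exists>j<4. \<exists>h\<in>carrier G. beta2 G (beta3 G (beta4 G (beta4 G (beta3_inv G (beta2_inv G (R 2)))))) = sim_conj G h (R j)"
  by (rule wit[of 2 "b \<otimes> a \<otimes> b \<otimes> a"]) (simp_all add: R_def beta2_def beta3_def beta4_def beta2_inv_def beta3_inv_def beta4_inv_def sim_conj_def ws)

lemma c2_3: "\<exists>j<4. \<exists>h\<in>carrier G. beta3 G (beta3 G (R 2)) = sim_conj G h (R j)"
  by (rule wit[of 2 "\<one>"]) (simp_all add: R_def beta2_def beta3_def beta4_def beta2_inv_def beta3_inv_def beta4_inv_def sim_conj_def ws)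

lemma c2_4: "\<exists>j<4. \<exists>h\<in>carrier G. beta3 G (beta4 G (beta4 G (beta3_inv G (R 2)))) = sim_conj G h (R j)"
  by (rule wit[of 1 "a \<otimes> inv b \<otimes> a"]) (simp_all add: R_def beta2_def beta3_def beta4_def beta2_inv_def beta3_inv_def beta4_inv_def sim_conj_def ws)

lemma c2_5: "\<exists>j<4. \<exists>h\<in>carrier G. beta4 G (beta4 G (R 2)) = sim_conj G h (R j)"
  by (rule wit[of 0 "a \<otimes> inv b"]) (simp_all add: R_def beta2_def beta3_def beta4_def beta2_inv_def beta3_inv_def beta4_inv_def sim_conj_def ws)

lemma c2_6: "\<exists>j<4. \<exists>h\<in>carrier G. beta2_inv G (beta2_inv G (R 2)) = sim_conj G h (R j)"
  by (rule wit[of 1 "a"]) (simp_all add: R_def beta2_def beta3_def beta4_def beta2_inv_def beta3_inv_def beta4_inv_def sim_conj_def ws)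

lemma c2_7: "\<exists>j<4. \<exists>h\<in>carrier G. beta2_inv G (beta3_inv G (beta3_inv G (beta2 G (R 2)))) = sim_conj G h (R j)"
  by (rule wit[of 3 "a \<otimes> b \<otimes> a"]) (simp_all add: R_def beta2_def beta3_def beta4_def beta2_inv_def beta3_inv_def beta4_inv_def sim_conj_def ws)

lemma c2_8: "\<exists>j<4. \<exists>h\<in>carrier G. beta2_inv G (beta3_inv G (beta4_inv G (beta4_inv G (beta3 G (beta2 G (R 2)))))) = sim_conj G h (R j)"
  by (rule wit[of 2 "inv b \<otimes> a \<otimes> inv b \<otimes> a"]) (simp_all add: R_def beta2_def beta3_def beta4_def beta2_inv_def beta3_inv_def beta4_inv_def sim_conj_def ws)

lemma c2_9: "\<exists>j<4. \<exists>h\<in>carrier G. beta3_inv G (beta3_inv G (R 2)) = sim_conj G h (R j)"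
  by (rule wit[of 2 "\<one>"]) (simp_all add: R_def beta2_def beta3_def beta4_def beta2_inv_def beta3_inv_def beta4_inv_def sim_conj_def ws)

lemma c2_10: "\<exists>j<4. \<exists>h\<in>carrier G. beta3_inv G (beta4_inv G (beta4_inv G (beta3 G (R 2)))) = sim_conj G h (R j)"
  by (rule wit[of 0 "a \<otimes> b \<otimes> a"]) (simp_all add: R_def beta2_def beta3_def beta4_def beta2_inv_def beta3_inv_def beta4_inv_def sim_conj_def ws)

lemma c2_11: "\<exists>j<4. \<exists>h\<in>carrier G. beta4_inv G (beta4_inv G (R 2)) = sim_conj G h (R j)"
  by (rule wit[of 1 "a \<otimes> b"]) (simp_all add: R_def beta2_def beta3_def beta4_def beta2_inv_def beta3_inv_def beta4_inv_def sim_conj_def ws)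

lemma clos2: "f \<in> pure_braid_gens G \<Longrightarrow> \<exists>j<4. \<exists>h\<in>carrier G. f (R 2) = sim_conj G h (R j)"
  unfolding pure_braid_gens_def Let_def by (elim insertE emptyE) (simp_all only: comp_apply c2_0 c2_1 c2_2 c2_3 c2_4 c2_5 c2_6 c2_7 c2_8 c2_9 c2_10 c2_11)

lemma c3_0: "\<exists>j<4. \<exists>h\<in>carrier G. beta2 G (beta2 G (R 3)) = sim_conj G h (R j)"
  by (rule wit[of 3 "\<one>"]) (simp_all add: R_def beta2_def beta3_def beta4_def beta2_inv_def beta3_inv_def beta4_inv_def sim_conj_def ws)

lemma c3_1: "\<exists>j<4. \<exists>h\<in>carrier G. beta2 G (beta3 G (beta3 G (beta2_inv G (R 3)))) = sim_conj G h (R j)"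
  by (rule wit[of 0 "a \<otimes> inv b"]) (simp_all add: R_def beta2_def beta3_def beta4_def beta2_inv_def beta3_inv_def beta4_inv_def sim_conj_def ws)

lemma c3_2: "\<exists>j<4. \<exists>h\<in>carrier G. beta2 G (beta3 G (beta4 G (beta4 G (beta3_inv G (beta2_inv G (R 3)))))) = sim_conj G h (R j)"
  by (rule wit[of 1 "a \<otimes> b"]) (simp_all add: R_def beta2_def beta3_def beta4_def beta2_inv_def beta3_inv_def beta4_inv_def sim_conj_def ws)

lemma c3_3: "\<exists>j<4. \<exists>h\<in>carrier G. beta3 G (beta3 G (R 3)) = sim_conj G h (R j)"
  by (rule wit[of 1 "a \<otimes> inv b"]) (simp_all add: R_def beta2_def beta3_def beta4_def beta2_inv_def beta3_inv_def beta4_inv_def sim_conj_def ws)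

lemma c3_4: "\<exists>j<4. \<exists>h\<in>carrier G. beta3 G (beta4 G (beta4 G (beta3_inv G (R 3)))) = sim_conj G h (R j)"
  by (rule wit[of 2 "a \<otimes> b \<otimes> a"]) (simp_all add: R_def beta2_def beta3_def beta4_def beta2_inv_def beta3_inv_def beta4_inv_def sim_conj_def ws)

lemma c3_5: "\<exists>j<4. \<exists>h\<in>carrier G. beta4 G (beta4 G (R 3)) = sim_conj G h (R j)"
  by (rule wit[of 3 "b \<otimes> a \<otimes> b \<otimes> a"]) (simp_all add: R_def beta2_def beta3_def beta4_def beta2_inv_def beta3_inv_def beta4_inv_def sim_conj_def ws)

lemma c3_6: "\<exists>j<4. \<exists>h\<in>carrier G. beta2_inv G (beta2_inv G (R 3)) = sim_conj G h (R j)"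
  by (rule wit[of 3 "\<one>"]) (simp_all add: R_def beta2_def beta3_def beta4_def beta2_inv_def beta3_inv_def beta4_inv_def sim_conj_def ws)

lemma c3_7: "\<exists>j<4. \<exists>h\<in>carrier G. beta2_inv G (beta3_inv G (beta3_inv G (beta2 G (R 3)))) = sim_conj G h (R j)"
  by (rule wit[of 1 "a \<otimes> inv b \<otimes> a"]) (simp_all add: R_def beta2_def beta3_def beta4_def beta2_inv_def beta3_inv_def beta4_inv_def sim_conj_def ws)

lemma c3_8: "\<exists>j<4. \<exists>h\<in>carrier G. beta2_inv G (beta3_inv G (beta4_inv G (beta4_inv G (beta3 G (beta2 G (R 3)))))) = sim_conj G h (R j)"
  by (rule wit[of 0 "a \<otimes> inv b \<otimes> a \<otimes> b"]) (simp_all add: R_def beta2_def beta3_def beta4_def beta2_inv_def beta3_inv_def beta4_inv_def sim_conj_def ws)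

lemma c3_9: "\<exists>j<4. \<exists>h\<in>carrier G. beta3_inv G (beta3_inv G (R 3)) = sim_conj G h (R j)"
  by (rule wit[of 0 "a \<otimes> inv b \<otimes> a"]) (simp_all add: R_def beta2_def beta3_def beta4_def beta2_inv_def beta3_inv_def beta4_inv_def sim_conj_def ws)

lemma c3_10: "\<exists>j<4. \<exists>h\<in>carrier G. beta3_inv G (beta4_inv G (beta4_inv G (beta3 G (R 3)))) = sim_conj G h (R j)"
  by (rule wit[of 2 "a \<otimes> inv b \<otimes> a \<otimes> b \<otimes> a"]) (simp_all add: R_def beta2_def beta3_def beta4_def beta2_inv_def beta3_inv_def beta4_inv_def sim_conj_def ws)

lemma c3_11: "\<exists>j<4. \<exists>h\<in>carrier G. beta4_inv G (beta4_inv G (R 3)) = sim_conj G h (R j)"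
  by (rule wit[of 3 "a \<otimes> inv b \<otimes> a \<otimes> inv b"]) (simp_all add: R_def beta2_def beta3_def beta4_def beta2_inv_def beta3_inv_def beta4_inv_def sim_conj_def ws)

lemma clos3: "f \<in> pure_braid_gens G \<Longrightarrow> \<exists>j<4. \<exists>h\<in>carrier G. f (R 3) = sim_conj G h (R j)"
  unfolding pure_braid_gens_def Let_def by (elim insertE emptyE) (simp_all only: comp_apply c3_0 c3_1 c3_2 c3_3 c3_4 c3_5 c3_6 c3_7 c3_8 c3_9 c3_10 c3_11)

lemma d0_1: "tuple_class G (R 0) \<noteq> tuple_class G (R 1)"
proof
  assume E: "tuple_class G (R 0) = tuple_class G (R 1)"
  have "R 1 \<in> tuple_class G (R 0)" using E tc_self[OF Rset] by simp
  then obtain g where g: "g \<in> carrier G" "sim_conj G g (R 0) = R 1"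
    unfolding tuple_class_def by auto
  define k where "k = (\<one>) \<otimes> g \<otimes> inv (\<one>)"
  have kc: "k \<in> carrier G" using g by (simp add: k_def ws)
  have hjc: "(\<one>) \<in> carrier G" by (simp add: ws)
  have "sim_conj G (\<one>) (R 1) = sim_conj G ((\<one>) \<otimes> g) (R 0)"
    using sim_conj_comp[OF Rset hjc g(1), of 0] g(2) by simp
  also have "(\<one>) \<otimes> g = k \<otimes> (\<one>)" using g by (simp add: k_def m_assoc ws)
  also have "sim_conj G (k \<otimes> (\<one>)) (R 0) = sim_conj G k (sim_conj G (\<one>) (R 0))"
    using kc by (simp add: sim_conj_comp Rset ws)
  also have "sim_conj G (\<one>) (R 0) = [inv b \<otimes> a, a \<otimes> inv b, inv b \<otimes> a, a]" by (simp add: R_def sim_conj_def ws)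
  finally have "sim_conj G k [inv b \<otimes> a, a \<otimes> inv b, inv b \<otimes> a, a] = sim_conj G (\<one>) (R 1)" ..
  also have "sim_conj G (\<one>) (R 1) = [a \<otimes> inv b, b \<otimes> a \<otimes> b, inv b \<otimes> a, a]" by (simp add: R_def sim_conj_def ws)
  finally have L: "sim_conj G k [inv b \<otimes> a, a \<otimes> inv b, inv b \<otimes> a, a] = [a \<otimes> inv b, b \<otimes> a \<otimes> b, inv b \<otimes> a, a]" .
  note Lc = L[unfolded sim_conj_def list.map list.inject]
  note ck = Lc[THEN conjunct2, THEN conjunct2, THEN conjunct1]
  note cl = Lc[THEN conjunct2, THEN conjunct2, THEN conjunct2, THEN conjunct1]
  note cn = Lc[THEN conjunct1]
  have uk: "inv b \<otimes> a \<in> cent k" using conj_fix[OF ck] kc by (simp add: cent_def ws)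
  have ul: "a \<in> cent k" using conj_fix[OF cl] kc by (simp add: cent_def ws)
  have eb: "(a) \<otimes> (inv (inv b \<otimes> a)) = b" by (simp add: ws)
  have ka: "a \<in> cent k" by (rule ul)
  have "(a) \<otimes> (inv (inv b \<otimes> a)) \<in> cent k" by (rule cent_mult[OF ul cent_inv[OF uk kc] kc])
  hence kb: "b \<in> cent k" by (simp only: eb)
  have k1: "k = \<one>" using central_one[OF kc ka kb] .
  have en: "inv b \<otimes> a = a \<otimes> inv b" using cn k1 a b by simp
  have "a \<otimes> b = (b) \<otimes> (inv b \<otimes> a) \<otimes> (b)" by (simp add: ws)
  also have "\<dots> = (b) \<otimes> (a \<otimes> inv b) \<otimes> (b)" by (simp only: en)
  also have "\<dots> = b \<otimes> a" by (simp add: ws)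
  finally show False using ab_noncomm by blast
qed

lemma d0_2: "tuple_class G (R 0) \<noteq> tuple_class G (R 2)"
proof
  assume E: "tuple_class G (R 0) = tuple_class G (R 2)"
  have "R 2 \<in> tuple_class G (R 0)" using E tc_self[OF Rset] by simp
  then obtain g where g: "g \<in> carrier G" "sim_conj G g (R 0) = R 2"
    unfolding tuple_class_def by auto
  define k where "k = (\<one>) \<otimes> g \<otimes> inv (\<one>)"
  have kc: "k \<in> carrier G" using g by (simp add: k_def ws)
  have hjc: "(\<one>) \<in> carrier G" by (simp add: ws)
  have "sim_conj G (\<one>) (R 2) = sim_conj G ((\<one>) \<otimes> g) (R 0)"
    using sim_conj_comp[OF Rset hjc g(1), of 0] g(2) by simp
  also have "(\<one>) \<otimes> g = k \<otimes> (\<one>)" using g by (simp add: k_def m_assoc ws)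
  also have "sim_conj G (k \<otimes> (\<one>)) (R 0) = sim_conj G k (sim_conj G (\<one>) (R 0))"
    using kc by (simp add: sim_conj_comp Rset ws)
  also have "sim_conj G (\<one>) (R 0) = [inv b \<otimes> a, a \<otimes> inv b, inv b \<otimes> a, a]" by (simp add: R_def sim_conj_def ws)
  finally have "sim_conj G k [inv b \<otimes> a, a \<otimes> inv b, inv b \<otimes> a, a] = sim_conj G (\<one>) (R 2)" ..
  also have "sim_conj G (\<one>) (R 2) = [a \<otimes> b \<otimes> a \<otimes> b \<otimes> a, a \<otimes> inv b, a \<otimes> inv b, a]" by (simp add: R_def sim_conj_def ws)
  finally have L: "sim_conj G k [inv b \<otimes> a, a \<otimes> inv b, inv b \<otimes> a, a] = [a \<otimes> b \<otimes> a \<otimes> b \<otimes> a, a \<otimes> inv b, a \<otimes> inv b, a]" .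
  note Lc = L[unfolded sim_conj_def list.map list.inject]
  note ck = Lc[THEN conjunct2, THEN conjunct1]
  note cl = Lc[THEN conjunct2, THEN conjunct2, THEN conjunct2, THEN conjunct1]
  note cn = Lc[THEN conjunct1]
  have uk: "a \<otimes> inv b \<in> cent k" using conj_fix[OF ck] kc by (simp add: cent_def ws)
  have ul: "a \<in> cent k" using conj_fix[OF cl] kc by (simp add: cent_def ws)
  have eb: "inv (a \<otimes> inv b) \<otimes> ((a)) = b" by (simp add: ws)
  have ka: "a \<in> cent k" by (rule ul)
  have "inv (a \<otimes> inv b) \<otimes> ((a)) \<in> cent k" by (rule cent_mult[OF cent_inv[OF uk kc] ul kc])
  hence kb: "b \<in> cent k" by (simp only: eb)
  have k1: "k = \<one>" using central_one[OF kc ka kb] .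
  have en: "inv b \<otimes> a = a \<otimes> b \<otimes> a \<otimes> b \<otimes> a" using cn k1 a b by simp
  have "a \<otimes> b = (a) \<otimes> (inv b \<otimes> a) \<otimes> (a \<otimes> inv b)" by (simp add: ws)
  also have "\<dots> = (a) \<otimes> (a \<otimes> b \<otimes> a \<otimes> b \<otimes> a) \<otimes> (a \<otimes> inv b)" by (simp only: en)
  also have "\<dots> = b \<otimes> a" by (simp add: ws)
  finally show False using ab_noncomm by blast
qed

lemma d0_3: "tuple_class G (R 0) \<noteq> tuple_class G (R 3)"
proof
  assume E: "tuple_class G (R 0) = tuple_class G (R 3)"
  have "R 3 \<in> tuple_class G (R 0)" using E tc_self[OF Rset] by simp
  then obtain g where g: "g \<in> carrier G" "sim_conj G g (R 0) = R 3"
    unfolding tuple_class_def by auto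
  define k where "k = (\<one>) \<otimes> g \<otimes> inv (\<one>)"
  have kc: "k \<in> carrier G" using g by (simp add: k_def ws)
  have hjc: "(\<one>) \<in> carrier G" by (simp add: ws)
  have "sim_conj G (\<one>) (R 3) = sim_conj G ((\<one>) \<otimes> g) (R 0)"
    using sim_conj_comp[OF Rset hjc g(1), of 0] g(2) by simp
  also have "(\<one>) \<otimes> g = k \<otimes> (\<one>)" using g by (simp add: k_def m_assoc ws)
  also have "sim_conj G (k \<otimes> (\<one>)) (R 0) = sim_conj G k (sim_conj G (\<one>) (R 0))"
    using kc by (simp add: sim_conj_comp Rset ws)
  also have "sim_conj G (\<one>) (R 0) = [inv b \<otimes> a, a \<otimes> inv b, inv b \<otimes> a, a]" by (simp add: R_def sim_conj_def ws)
  finally have "sim_conj G k [inv b \<otimes> a, a \<otimes> inv b, inv b \<otimes> a, a] = sim_conj G (\<one>) (R 3)" ..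
  also have "sim_conj G (\<one>) (R 3) = [a \<otimes> inv b, a \<otimes> inv b, inv b \<otimes> a, a \<otimes> inv b \<otimes> a \<otimes> b \<otimes> a]" by (simp add: R_def sim_conj_def ws)
  finally have L: "sim_conj G k [inv b \<otimes> a, a \<otimes> inv b, inv b \<otimes> a, a] = [a \<otimes> inv b, a \<otimes> inv b, inv b \<otimes> a, a \<otimes> inv b \<otimes> a \<otimes> b \<otimes> a]" .
  note Lc = L[unfolded sim_conj_def list.map list.inject]
  note ck = Lc[THEN conjunct2, THEN conjunct1]
  note cl = Lc[THEN conjunct2, THEN conjunct2, THEN conjunct1]
  note cn = Lc[THEN conjunct1]
  have uk: "a \<otimes> inv b \<in> cent k" using conj_fix[OF ck] kc by (simp add: cent_def ws)
  have ul: "inv b \<otimes> a \<in> cent k" using conj_fix[OF cl] kc by (simp add: cent_def ws)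
  have ea: "(a \<otimes> inv b) \<otimes> ((inv b \<otimes> a) \<otimes> ((a \<otimes> inv b))) = a" by (simp add: ws)
  have eb: "(inv b \<otimes> a) \<otimes> ((a \<otimes> inv b)) = b" by (simp add: ws)
  have "(a \<otimes> inv b) \<otimes> ((inv b \<otimes> a) \<otimes> ((a \<otimes> inv b))) \<in> cent k" by (rule cent_mult[OF uk cent_mult[OF ul uk kc] kc])
  hence ka: "a \<in> cent k" by (simp only: ea)
  have "(inv b \<otimes> a) \<otimes> ((a \<otimes> inv b)) \<in> cent k" by (rule cent_mult[OF ul uk kc])
  hence kb: "b \<in> cent k" by (simp only: eb)
  have k1: "k = \<one>" using central_one[OF kc ka kb] .
  have en: "inv b \<otimes> a = a \<otimes> inv b" using cn k1 a b by simp
  have "a \<otimes> b = (b) \<otimes> (inv b \<otimes> a) \<otimes> (b)" by (simp add: ws)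
  also have "\<dots> = (b) \<otimes> (a \<otimes> inv b) \<otimes> (b)" by (simp only: en)
  also have "\<dots> = b \<otimes> a" by (simp add: ws)
  finally show False using ab_noncomm by blast
qed

lemma d1_2: "tuple_class G (R 1) \<noteq> tuple_class G (R 2)"
proof
  assume E: "tuple_class G (R 1) = tuple_class G (R 2)"
  have "R 2 \<in> tuple_class G (R 1)" using E tc_self[OF Rset] by simp
  then obtain g where g: "g \<in> carrier G" "sim_conj G g (R 1) = R 2"
    unfolding tuple_class_def by auto
  define k where "k = (a) \<otimes> g \<otimes> inv (\<one>)"
  have kc: "k \<in> carrier G" using g by (simp add: k_def ws)
  have hjc: "(a) \<in> carrier G" by (simp add: ws)
  have "sim_conj G (a) (R 2) = sim_conj G ((a) \<otimes> g) (R 1)"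
    using sim_conj_comp[OF Rset hjc g(1), of 1] g(2) by simp
  also have "(a) \<otimes> g = k \<otimes> (\<one>)" using g by (simp add: k_def m_assoc ws)
  also have "sim_conj G (k \<otimes> (\<one>)) (R 1) = sim_conj G k (sim_conj G (\<one>) (R 1))"
    using kc by (simp add: sim_conj_comp Rset ws)
  also have "sim_conj G (\<one>) (R 1) = [a \<otimes> inv b, b \<otimes> a \<otimes> b, inv b \<otimes> a, a]" by (simp add: R_def sim_conj_def ws)
  finally have "sim_conj G k [a \<otimes> inv b, b \<otimes> a \<otimes> b, inv b \<otimes> a, a] = sim_conj G (a) (R 2)" ..
  also have "sim_conj G (a) (R 2) = [b \<otimes> a \<otimes> b, inv b \<otimes> a, inv b \<otimes> a, a]" by (simp add: R_def sim_conj_def ws)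
  finally have L: "sim_conj G k [a \<otimes> inv b, b \<otimes> a \<otimes> b, inv b \<otimes> a, a] = [b \<otimes> a \<otimes> b, inv b \<otimes> a, inv b \<otimes> a, a]" .
  note Lc = L[unfolded sim_conj_def list.map list.inject]
  note ck = Lc[THEN conjunct2, THEN conjunct2, THEN conjunct1]
  note cl = Lc[THEN conjunct2, THEN conjunct2, THEN conjunct2, THEN conjunct1]
  note cn = Lc[THEN conjunct1]
  have uk: "inv b \<otimes> a \<in> cent k" using conj_fix[OF ck] kc by (simp add: cent_def ws)
  have ul: "a \<in> cent k" using conj_fix[OF cl] kc by (simp add: cent_def ws)
  have eb: "(a) \<otimes> (inv (inv b \<otimes> a)) = b" by (simp add: ws)
  have ka: "a \<in> cent k" by (rule ul)
  have "(a) \<otimes> (inv (inv b \<otimes> a)) \<in> cent k" by (rule cent_mult[OF ul cent_inv[OF uk kc] kc])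
  hence kb: "b \<in> cent k" by (simp only: eb)
  have k1: "k = \<one>" using central_one[OF kc ka kb] .
  have en: "a \<otimes> inv b = b \<otimes> a \<otimes> b" using cn k1 a b by simp
  have "a \<otimes> b = (\<one>) \<otimes> (a \<otimes> inv b) \<otimes> (inv b)" by (simp add: ws)
  also have "\<dots> = (\<one>) \<otimes> (b \<otimes> a \<otimes> b) \<otimes> (inv b)" by (simp only: en)
  also have "\<dots> = b \<otimes> a" by (simp add: ws)
  finally show False using ab_noncomm by blast
qed

lemma d1_3: "tuple_class G (R 1) \<noteq> tuple_class G (R 3)"
proof
  assume E: "tuple_class G (R 1) = tuple_class G (R 3)"
  have "R 3 \<in> tuple_class G (R 1)" using E tc_self[OF Rset] by simp
  then obtain g where g: "g \<in> carrier G" "sim_conj G g (R 1) = R 3"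
    unfolding tuple_class_def by auto
  define k where "k = (\<one>) \<otimes> g \<otimes> inv (\<one>)"
  have kc: "k \<in> carrier G" using g by (simp add: k_def ws)
  have hjc: "(\<one>) \<in> carrier G" by (simp add: ws)
  have "sim_conj G (\<one>) (R 3) = sim_conj G ((\<one>) \<otimes> g) (R 1)"
    using sim_conj_comp[OF Rset hjc g(1), of 1] g(2) by simp
  also have "(\<one>) \<otimes> g = k \<otimes> (\<one>)" using g by (simp add: k_def m_assoc ws)
  also have "sim_conj G (k \<otimes> (\<one>)) (R 1) = sim_conj G k (sim_conj G (\<one>) (R 1))"
    using kc by (simp add: sim_conj_comp Rset ws)
  also have "sim_conj G (\<one>) (R 1) = [a \<otimes> inv b, b \<otimes> a \<otimes> b, inv b \<otimes> a, a]" by (simp add: R_def sim_conj_def ws)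
  finally have "sim_conj G k [a \<otimes> inv b, b \<otimes> a \<otimes> b, inv b \<otimes> a, a] = sim_conj G (\<one>) (R 3)" ..
  also have "sim_conj G (\<one>) (R 3) = [a \<otimes> inv b, a \<otimes> inv b, inv b \<otimes> a, a \<otimes> inv b \<otimes> a \<otimes> b \<otimes> a]" by (simp add: R_def sim_conj_def ws)
  finally have L: "sim_conj G k [a \<otimes> inv b, b \<otimes> a \<otimes> b, inv b \<otimes> a, a] = [a \<otimes> inv b, a \<otimes> inv b, inv b \<otimes> a, a \<otimes> inv b \<otimes> a \<otimes> b \<otimes> a]" .
  note Lc = L[unfolded sim_conj_def list.map list.inject]
  note ck = Lc[THEN conjunct1]
  note cl = Lc[THEN conjunct2, THEN conjunct2, THEN conjunct1]
  note cn = Lc[THEN conjunct2, THEN conjunct1]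
  have uk: "a \<otimes> inv b \<in> cent k" using conj_fix[OF ck] kc by (simp add: cent_def ws)
  have ul: "inv b \<otimes> a \<in> cent k" using conj_fix[OF cl] kc by (simp add: cent_def ws)
  have ea: "(a \<otimes> inv b) \<otimes> ((inv b \<otimes> a) \<otimes> ((a \<otimes> inv b))) = a" by (simp add: ws)
  have eb: "(inv b \<otimes> a) \<otimes> ((a \<otimes> inv b)) = b" by (simp add: ws)
  have "(a \<otimes> inv b) \<otimes> ((inv b \<otimes> a) \<otimes> ((a \<otimes> inv b))) \<in> cent k" by (rule cent_mult[OF uk cent_mult[OF ul uk kc] kc])
  hence ka: "a \<in> cent k" by (simp only: ea)
  have "(inv b \<otimes> a) \<otimes> ((a \<otimes> inv b)) \<in> cent k" by (rule cent_mult[OF ul uk kc])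
  hence kb: "b \<in> cent k" by (simp only: eb)
  have k1: "k = \<one>" using central_one[OF kc ka kb] .
  have en: "b \<otimes> a \<otimes> b = a \<otimes> inv b" using cn k1 a b by simp
  have "a \<otimes> b = (a) \<otimes> (b \<otimes> a \<otimes> b) \<otimes> (inv b \<otimes> a)" by (simp add: ws)
  also have "\<dots> = (a) \<otimes> (a \<otimes> inv b) \<otimes> (inv b \<otimes> a)" by (simp only: en)
  also have "\<dots> = b \<otimes> a" by (simp add: ws)
  finally show False using ab_noncomm by blast
qed

lemma d2_3: "tuple_class G (R 2) \<noteq> tuple_class G (R 3)"
proof
  assume E: "tuple_class G (R 2) = tuple_class G (R 3)"
  have "R 3 \<in> tuple_class G (R 2)" using E tc_self[OF Rset] by simp
  then obtain g where g: "g \<in> carrier G" "sim_conj G g (R 2) = R 3"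
    unfolding tuple_class_def by auto
  define k where "k = (b \<otimes> a) \<otimes> g \<otimes> inv (\<one>)"
  have kc: "k \<in> carrier G" using g by (simp add: k_def ws)
  have hjc: "(b \<otimes> a) \<in> carrier G" by (simp add: ws)
  have "sim_conj G (b \<otimes> a) (R 3) = sim_conj G ((b \<otimes> a) \<otimes> g) (R 2)"
    using sim_conj_comp[OF Rset hjc g(1), of 2] g(2) by simp
  also have "(b \<otimes> a) \<otimes> g = k \<otimes> (\<one>)" using g by (simp add: k_def m_assoc ws)
  also have "sim_conj G (k \<otimes> (\<one>)) (R 2) = sim_conj G k (sim_conj G (\<one>) (R 2))"
    using kc by (simp add: sim_conj_comp Rset ws)
  also have "sim_conj G (\<one>) (R 2) = [a \<otimes> b \<otimes> a \<otimes> b \<otimes> a, a \<otimes> inv b, a \<otimes> inv b, a]" by (simp add: R_def sim_conj_def ws)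
  finally have "sim_conj G k [a \<otimes> b \<otimes> a \<otimes> b \<otimes> a, a \<otimes> inv b, a \<otimes> inv b, a] = sim_conj G (b \<otimes> a) (R 3)" ..
  also have "sim_conj G (b \<otimes> a) (R 3) = [a \<otimes> inv b, a \<otimes> inv b, b \<otimes> a \<otimes> b, a]" by (simp add: R_def sim_conj_def ws)
  finally have L: "sim_conj G k [a \<otimes> b \<otimes> a \<otimes> b \<otimes> a, a \<otimes> inv b, a \<otimes> inv b, a] = [a \<otimes> inv b, a \<otimes> inv b, b \<otimes> a \<otimes> b, a]" .
  note Lc = L[unfolded sim_conj_def list.map list.inject]
  note ck = Lc[THEN conjunct2, THEN conjunct1]
  note cl = Lc[THEN conjunct2, THEN conjunct2, THEN conjunct2, THEN conjunct1]
  note cn = Lc[THEN conjunct1]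
  have uk: "a \<otimes> inv b \<in> cent k" using conj_fix[OF ck] kc by (simp add: cent_def ws)
  have ul: "a \<in> cent k" using conj_fix[OF cl] kc by (simp add: cent_def ws)
  have eb: "inv (a \<otimes> inv b) \<otimes> ((a)) = b" by (simp add: ws)
  have ka: "a \<in> cent k" by (rule ul)
  have "inv (a \<otimes> inv b) \<otimes> ((a)) \<in> cent k" by (rule cent_mult[OF cent_inv[OF uk kc] ul kc])
  hence kb: "b \<in> cent k" by (simp only: eb)
  have k1: "k = \<one>" using central_one[OF kc ka kb] .
  have en: "a \<otimes> b \<otimes> a \<otimes> b \<otimes> a = a \<otimes> inv b" using cn k1 a b by simp
  have "a \<otimes> b = (inv b \<otimes> a) \<otimes> (a \<otimes> b \<otimes> a \<otimes> b \<otimes> a) \<otimes> (a)" by (simp add: ws)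
  also have "\<dots> = (inv b \<otimes> a) \<otimes> (a \<otimes> inv b) \<otimes> (a)" by (simp only: en)
  also have "\<dots> = b \<otimes> a" by (simp add: ws)
  finally show False using ab_noncomm by blast
qed

definition Tset :: "'a list set" where
  "Tset = {t. \<exists>g\<in>carrier G. \<exists>i<4. t = sim_conj G g (R i)}"

lemma clos:
  assumes f: "f \<in> pure_braid_gens G" and i: "i < (4::nat)"
  shows "\<exists>j<4. \<exists>h\<in>carrier G. f (R i) = sim_conj G h (R j)"
proof -
  have "i = 0 \<or> i = 1 \<or> i = 2 \<or> i = 3" using i by auto
  then show ?thesis using clos0[OF f] clos1[OF f] clos2[OF f] clos3[OF f] by auto
qed

lemma Tset_step:
  assumes t: "t \<in> Tset" and f: "f \<in> pure_braid_gens G"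
  shows "f t \<in> Tset"
proof -
  obtain g i where g: "g \<in> carrier G" "i < 4" "t = sim_conj G g (R i)"
    using t unfolding Tset_def by auto
  obtain j h where h: "j < 4" "h \<in> carrier G" "f (R i) = sim_conj G h (R j)"
    using clos[OF f g(2)] by auto
  have "f t = sim_conj G g (f (R i))" using gens_P4_conj[OF f RP4 g(1)] g(3) by simp
  also have "\<dots> = sim_conj G (g \<otimes> h) (R j)" using h g(1) by (simp add: sim_conj_comp Rset)
  finally show ?thesis unfolding Tset_def using g(1) h by auto
qed

lemma Tset_rtrancl:
  assumes "(s, t) \<in> (pure_step G)\<^sup>*" "s \<in> Tset"
  shows "t \<in> Tset"
  using assms
proof (induction rule: rtrancl_induct)
  case base then show ?case .
next
  case (step y z)
  then obtain f where "f \<in> pure_braid_gens G" "z = f y" unfolding pure_step_def by auto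
  then show ?case using step Tset_step by auto
qed

lemma Tset_class:
  assumes "t \<in> Tset"
  shows "tuple_class G t \<in> {tuple_class G (R 0), tuple_class G (R 1), tuple_class G (R 2), tuple_class G (R 3)}"
proof -
  obtain g i where g: "g \<in> carrier G" "i < 4" "t = sim_conj G g (R i)"
    using assms unfolding Tset_def by auto
  have "tuple_class G t = tuple_class G (R i)" using g by (simp add: tc_conj Rset)
  moreover have "i = 0 \<or> i = 1 \<or> i = 2 \<or> i = 3" using g(2) by auto
  ultimately show ?thesis by auto
qed

lemma step_in: "f \<in> pure_braid_gens G \<Longrightarrow> (s, f s) \<in> (pure_step G)\<^sup>*"
  unfolding pure_step_def by blast

lemma s1: "beta2 G (beta2 G (R 0)) = R 1"
  by (simp add: R_def bdefs ws)
lemma s2: "beta2 G (beta3 G (beta3 G (beta2_inv G (R 0)))) = R 2"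
  by (simp add: R_def bdefs ws)
lemma s3: "beta2 G (beta3 G (beta4 G (beta4 G (beta3_inv G (beta2_inv G (R 0)))))) = R 3"
  by (simp add: R_def bdefs ws)

lemma orbit:
  "pure_braid_orbit G (tuple_class G (R 0)) =
     {tuple_class G (R 0), tuple_class G (R 1), tuple_class G (R 2), tuple_class G (R 3)}"
proof
  show "pure_braid_orbit G (tuple_class G (R 0)) \<subseteq> {tuple_class G (R 0), tuple_class G (R 1), tuple_class G (R 2), tuple_class G (R 3)}"
  proof
    fix Y assume "Y \<in> pure_braid_orbit G (tuple_class G (R 0))"
    then obtain s t where st: "s \<in> tuple_class G (R 0)" "(s, t) \<in> (pure_step G)\<^sup>*" "Y = tuple_class G t"
      unfolding pure_braid_orbit_def by auto
    have "s \<in> Tset" using st(1) unfolding tuple_class_def Tset_def by force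
    then have "t \<in> Tset" using Tset_rtrancl st(2) by blast
    then show "Y \<in> {tuple_class G (R 0), tuple_class G (R 1), tuple_class G (R 2), tuple_class G (R 3)}"
      using Tset_class st(3) by simp
  qed
next
  have R0: "R 0 \<in> tuple_class G (R 0)" using tc_self[OF Rset] .
  have g1: "beta2 G \<circ> beta2 G \<in> pure_braid_gens G" by (simp add: pure_braid_gens_def Let_def)
  have g2: "beta2 G \<circ> beta3 G \<circ> beta3 G \<circ> beta2_inv G \<in> pure_braid_gens G"
    by (simp add: pure_braid_gens_def Let_def)
  have g3: "beta2 G \<circ> beta3 G \<circ> beta4 G \<circ> beta4 G \<circ> beta3_inv G \<circ> beta2_inv G \<in> pure_braid_gens G"
    by (simp add: pure_braid_gens_def Let_def)
  have r1: "(R 0, R 1) \<in> (pure_step G)\<^sup>*" using step_in[OF g1, of "R 0"] s1 by simp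
  have r2: "(R 0, R 2) \<in> (pure_step G)\<^sup>*" using step_in[OF g2, of "R 0"] s2 by simp
  have r3: "(R 0, R 3) \<in> (pure_step G)\<^sup>*" using step_in[OF g3, of "R 0"] s3 by simp
  have r0: "(R 0, R 0) \<in> (pure_step G)\<^sup>*" by simp
  show "{tuple_class G (R 0), tuple_class G (R 1), tuple_class G (R 2), tuple_class G (R 3)} \<subseteq> pure_braid_orbit G (tuple_class G (R 0))"
    unfolding pure_braid_orbit_def using R0 r0 r1 r2 r3 by blast
qed

lemma orbit_card: "card (pure_braid_orbit G (tuple_class G (R 0))) = 4"
  unfolding orbit using d0_1 d0_2 d0_3 d1_2 d1_3 d2_3
    not_sym[OF d0_1] not_sym[OF d0_2] not_sym[OF d0_3] not_sym[OF d1_2] not_sym[OF d1_3] not_sym[OF d2_3]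
  by simp

end

context group
begin

lemma conj_class_sub: "is_conj_class G K \<Longrightarrow> K \<subseteq> carrier G"
  unfolding is_conj_class_def conj_class_def by auto

lemma conj_class_closed:
  assumes "is_conj_class G K" "c \<in> K" "g \<in> carrier G"
  shows "g \<otimes> c \<otimes> inv g \<in> K"
proof -
  obtain x where x: "x \<in> carrier G" "K = conj_class G x" using assms(1) unfolding is_conj_class_def by auto
  then obtain h where h: "h \<in> carrier G" "c = h \<otimes> x \<otimes> inv h" using assms(2) unfolding conj_class_def by auto
  have "g \<otimes> c \<otimes> inv g = (g \<otimes> h) \<otimes> x \<otimes> inv (g \<otimes> h)"
    using h x assms(3) by (simp add: m_assoc inv_mult_group)
  then show ?thesis using x h assms(3) unfolding conj_class_def by auto
qed

lemma fin_Sigma: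
  assumes "finite (carrier G)"
  shows "finite (Sigma_i G Cs)"
proof -
  have "gen_tuples G Cs \<subseteq> {s. set s \<subseteq> carrier G \<and> length s = length Cs}"
    unfolding gen_tuples_def using generate.incl by fastforce
  then have "finite (gen_tuples G Cs)"
    using finite_lists_length_eq[OF assms] finite_subset by blast
  then show ?thesis unfolding Sigma_i_def by simp
qed

end

context group
begin

lemma main:
  assumes "finite (carrier G)"
    and "carrier G \<noteq> {\<one>\<^bsub>G\<^esub>}"
    and "grp_center G = {\<one>\<^bsub>G\<^esub>}"
    and "nontriv_conj_class G A2" and "nontriv_conj_class G A3" and "nontriv_conj_class G C"
    and "\<forall>x \<in> A2. group.ord G x = 2"
    and "\<forall>x \<in> A3. group.ord G x = 3"
    and "l_i G [A2, A3, C] > 0"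
  shows "(\<exists>Y \<in> Sigma_i G [C, C, C, A2]. card (pure_braid_orbit G Y) = 4)
       \<and> l_i G [C, C, (\<lambda>t. inv\<^bsub>G\<^esub> t) ` A3] > 0"
proof -
  have cA2: "is_conj_class G A2" and cA3: "is_conj_class G A3" and cC: "is_conj_class G C"
    using assms(4,5,6) unfolding nontriv_conj_class_def by auto
  have "Sigma_i G [A2, A3, C] \<noteq> {}" using assms(9) unfolding l_i_def by (metis card.empty less_irrefl)
  then obtain s where s: "s \<in> gen_tuples G [A2, A3, C]" unfolding Sigma_i_def by auto
  then have sl: "length s = 3" unfolding gen_tuples_def by auto
  then obtain x y z where xyz: "s = [x, y, z]" by (auto simp: numeral_eq_Suc length_Suc_conv)
  have xA: "x \<in> A2" and yA: "y \<in> A3" and zC: "z \<in> C"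
    using s unfolding gen_tuples_def xyz by (auto dest: spec[of _ 0] spec[of _ 1] spec[of _ 2])
  have x: "x \<in> carrier G" using xA conj_class_sub[OF cA2] by auto
  have y: "y \<in> carrier G" using yA conj_class_sub[OF cA3] by auto
  have z: "z \<in> carrier G" using zC conj_class_sub[OF cC] by auto
  have gs: "generate G {x, y, z} = carrier G" using s unfolding gen_tuples_def xyz by simp
  have "x \<otimes> (y \<otimes> (z \<otimes> \<one>)) = \<one>" using s unfolding gen_tuples_def xyz tuple_prod_def by simp
  then have "(x \<otimes> y) \<otimes> z = \<one>" using x y z by (simp add: m_assoc)
  then have "inv z = x \<otimes> y" using x y z by (intro inv_equality) auto
  then have zeq: "z = inv (x \<otimes> y)" using z by (metis inv_inv)
  have ox: "ord x = 2" using assms(7) xA by auto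
  have oy: "ord y = 3" using assms(8) yA by auto
  have xx: "x \<otimes> x = \<one>" using pow_ord_eq_1[OF x] ox x by (simp add: numeral_2_eq_2)
  have yyy: "y \<otimes> y \<otimes> y = \<one>" using pow_ord_eq_1[OF y] oy y by (simp add: numeral_3_eq_3 m_assoc)
  have x1: "x \<noteq> \<one>" using ox ord_eq_1[OF x] by auto
  have genxy: "generate G {x, y} = carrier G"
  proof
    show "generate G {x, y} \<subseteq> carrier G" using generate_incl x y by auto
  next
    have sub: "subgroup (generate G {x, y}) G" using generate_is_subgroup x y by auto
    have "z \<in> generate G {x, y}" unfolding zeq
      using x y by (intro generate_m_inv_closed generate.eng generate.incl) auto
    then have "{x, y, z} \<subseteq> generate G {x, y}" using generate.incl[of _ "{x, y}" G] by auto
    then show "carrier G \<subseteq> generate G {x, y}" using generate_subgroup_incl[OF _ sub] gs by metis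
  qed
  have "abg G x y"
    by (rule abg.intro, rule is_group, rule abg_axioms.intro) (use x y xx yyy genxy assms(3) x1 in auto)
  then interpret A: abg G x y .
  have zeq2: "z = inv y \<otimes> x" using zeq x y by (simp add: inv_mult_group A.ws1)
  have c2: "x \<otimes> inv y \<in> C"
  proof -
    have "x \<otimes> z \<otimes> inv x \<in> C" using conj_class_closed[OF cC zC x] .
    moreover have "x \<otimes> z \<otimes> inv x = x \<otimes> inv y" using x y unfolding zeq2 by (simp add: A.ws)
    ultimately show ?thesis by simp
  qed
  have c1: "inv y \<otimes> x \<in> C" using zC zeq2 by simp
  have gen_sub: "carrier G \<subseteq> generate G H" if "x \<in> generate G H" "y \<in> generate G H" "H \<subseteq> carrier G" for H
  proof -
    have sub: "subgroup (generate G H) G" using generate_is_subgroup that(3) by auto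
    have "generate G {x, y} \<subseteq> generate G H" using that(1,2) generate_subgroup_incl[OF _ sub] by auto
    then show ?thesis using genxy by simp
  qed
  have part1: "\<exists>Y \<in> Sigma_i G [C, C, C, A2]. card (pure_braid_orbit G Y) = 4"
  proof
    show "card (pure_braid_orbit G (tuple_class G (A.R 0))) = 4" by (rule A.orbit_card)
    have R0: "A.R 0 = [inv y \<otimes> x, x \<otimes> inv y, inv y \<otimes> x, x]" by (simp add: A.R_def)
    have "A.R 0 \<in> gen_tuples G [C, C, C, A2]"
      unfolding gen_tuples_def R0
    proof (intro CollectI conjI)
      show "length [inv y \<otimes> x, x \<otimes> inv y, inv y \<otimes> x, x] = length [C, C, C, A2]" by simp
      show "\<forall>j<length [C, C, C, A2]. [inv y \<otimes> x, x \<otimes> inv y, inv y \<otimes> x, x] ! j \<in> [C, C, C, A2] ! j"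
        using c1 c2 xA by (auto simp: less_Suc_eq numeral_eq_Suc)
      let ?H = "set [inv y \<otimes> x, x \<otimes> inv y, inv y \<otimes> x, x]"
      have Hc: "?H \<subseteq> carrier G" using x y by auto
      have xg: "x \<in> generate G ?H" by (rule generate.incl) simp
      have ug: "inv y \<otimes> x \<in> generate G ?H" by (rule generate.incl) simp
      have "(inv y \<otimes> x) \<otimes> x \<in> generate G ?H" using ug xg by (rule generate.eng)
      then have "inv ((inv y \<otimes> x) \<otimes> x) \<in> generate G ?H" using generate_m_inv_closed[OF Hc] by blast
      moreover have "inv ((inv y \<otimes> x) \<otimes> x) = y" using x y by (simp add: A.ws)
      ultimately have yg: "y \<in> generate G ?H" by simp
      show "generate G ?H = carrier G" using gen_sub[OF xg yg Hc] generate_incl[OF Hc] by auto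
      show "tuple_prod G [inv y \<otimes> x, x \<otimes> inv y, inv y \<otimes> x, x] = \<one>"
        unfolding tuple_prod_def using x y by (simp add: A.ws)
    qed
    then show "tuple_class G (A.R 0) \<in> Sigma_i G [C, C, C, A2]" unfolding Sigma_i_def by auto
  qed
  have part2: "l_i G [C, C, (\<lambda>t. inv\<^bsub>G\<^esub> t) ` A3] > 0"
  proof -
    have t: "[inv y \<otimes> x, x \<otimes> inv y, inv y] \<in> gen_tuples G [C, C, (\<lambda>t. inv\<^bsub>G\<^esub> t) ` A3]"
      unfolding gen_tuples_def
    proof (intro CollectI conjI)
      show "length [inv y \<otimes> x, x \<otimes> inv y, inv y] = length [C, C, (\<lambda>t. inv\<^bsub>G\<^esub> t) ` A3]" by simp
      show "\<forall>j<length [C, C, (\<lambda>t. inv\<^bsub>G\<^esub> t) ` A3]. [inv y \<otimes> x, x \<otimes> inv y, inv y] ! j \<in> [C, C, (\<lambda>t. inv\<^bsub>G\<^esub> t) ` A3] ! j"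
        using c1 c2 yA by (auto simp: less_Suc_eq numeral_eq_Suc)
      let ?H = "set [inv y \<otimes> x, x \<otimes> inv y, inv y]"
      have Hc: "?H \<subseteq> carrier G" using x y by auto
      have ig: "inv y \<in> generate G ?H" by (rule generate.incl) simp
      have ug: "inv y \<otimes> x \<in> generate G ?H" by (rule generate.incl) simp
      have "inv (inv y) \<in> generate G ?H" using generate_m_inv_closed[OF Hc ig] .
      then have yg: "y \<in> generate G ?H" using y by simp
      have "y \<otimes> (inv y \<otimes> x) \<in> generate G ?H" using yg ug by (rule generate.eng)
      then have xg: "x \<in> generate G ?H" using x y by (simp add: A.ws)
      show "generate G ?H = carrier G" using gen_sub[OF xg yg Hc] generate_incl[OF Hc] by auto
      show "tuple_prod G [inv y \<otimes> x, x \<otimes> inv y, inv y] = \<one>"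
        unfolding tuple_prod_def using x y by (simp add: A.ws)
    qed
    have "Sigma_i G [C, C, (\<lambda>t. inv\<^bsub>G\<^esub> t) ` A3] \<noteq> {}" using t unfolding Sigma_i_def by auto
    then show ?thesis unfolding l_i_def using fin_Sigma[OF assms(1)] by (simp add: card_gt_0_iff)
  qed
  show ?thesis using part1 part2 by simp
qed


end

theorem corollary5:
  fixes G :: "('a, 'b) monoid_scheme" and A2 A3 C :: "'a set"
  assumes "group G"
    and "finite (carrier G)"
    and "carrier G \<noteq> {\<one>\<^bsub>G\<^esub>}"
    and "grp_center G = {\<one>\<^bsub>G\<^esub>}"
    and "nontriv_conj_class G A2" and "nontriv_conj_class G A3" and "nontriv_conj_class G C"
    and "\<forall>x \<in> A2. group.ord G x = 2"
    and "\<forall>x \<in> A3. group.ord G x = 3"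
    and "l_i G [A2, A3, C] > 0"
  shows "(\<exists>Y \<in> Sigma_i G [C, C, C, A2]. card (pure_braid_orbit G Y) = 4)
       \<and> l_i G [C, C, (\<lambda>t. inv\<^bsub>G\<^esub> t) ` A3] > 0"
  using group.main[OF assms] .

end
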